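(* For every integer $n\ge2$, $\hat E_{2,n}(q)=\sum_{i=0}^{n-2}\binom{n}{i+2}q^i$.
   Context: Place $1,\dots,n$ clockwise on a circle. Distinct $p_1,\dots,p_m$ are in clockwise cyclic order if $(p_2-p_1)\bmod n<\dots<(p_m-p_1)\bmod n$ (residues in $\{0,\dots,n-1\}$). For $\pi\in S_n$ (fixed points regarded as "counterclockwise loops"), an ordered pair $(i,j)$, $i\ne j$, is aligned if $\pi(j)\ne j$, the entries of $(i,\pi(i),\pi(j),j)$ are pairwise distinct except that possibly $i=\pi(i)$, and the distinct entries in this order are in clockwise cyclic order. An alignment is an unordered pair $\{i,j\}$ with $(i,j)$ or $(j,i)$ aligned; $\mathrm{al}(\pi)$ is their number. A weak excedence of $\pi$ is an $i$ with $\pi(i)\ge i$. $E_{k,n}(q)=\sum q^{k(n-k)-\mathrm{al}(\pi)}$ over $\pi\in S_n$ with exactly $k$ weak excedences, and $\hat E_{k,n}(q)=q^{k-n}E_{k,n}(q)$. *)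

theory Defs
  imports Complex_Main "HOL-Combinatorics.Permutations"
begin

text \<open>Clockwise cyclic order of a list of points among 1..n placed on a circle:
  the residues (p_k - p_1) mod n are strictly increasing.\<close>
definition cw_order :: "nat \<Rightarrow> nat list \<Rightarrow> bool" where
  "cw_order n ps \<longleftrightarrow>
     sorted_wrt (<) (map (\<lambda>p. (int p - int (hd ps)) mod int n) ps)"

definition align_list :: "(nat \<Rightarrow> nat) \<Rightarrow> nat \<Rightarrow> nat \<Rightarrow> nat list" where
  "align_list \<pi> i j = (if \<pi> i = i then [i, \<pi> j, j] else [i, \<pi> i, \<pi> j, j])"

definition aligned :: "nat \<Rightarrow> (nat \<Rightarrow> nat) \<Rightarrow> nat \<Rightarrow> nat \<Rightarrow> bool" where
  "aligned n \<pi> i j \<longleftrightarrow> i \<noteq> j \<and> \<pi> j \<noteq> j \<and>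
     distinct (align_list \<pi> i j) \<and> cw_order n (align_list \<pi> i j)"

definition al :: "nat \<Rightarrow> (nat \<Rightarrow> nat) \<Rightarrow> nat" where
  "al n \<pi> = card {{i, j} | i j. i \<in> {1..n} \<and> j \<in> {1..n} \<and>
                    (aligned n \<pi> i j \<or> aligned n \<pi> j i)}"

definition wex :: "nat \<Rightarrow> (nat \<Rightarrow> nat) \<Rightarrow> nat" where
  "wex n \<pi> = card {i \<in> {1..n}. \<pi> i \<ge> i}"

definition E :: "nat \<Rightarrow> nat \<Rightarrow> real \<Rightarrow> real" where
  "E k n q = (\<Sum>\<pi> \<in> {\<pi>. \<pi> permutes {1..n} \<and> wex n \<pi> = k}.
                q powi (int (k * (n - k)) - int (al n \<pi>)))"

definition Ehat :: "nat \<Rightarrow> nat \<Rightarrow> real \<Rightarrow> real" where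
  "Ehat k n q = q powi (int k - int n) * E k n q"

end

theory Submission
  imports Defs
begin

definition R1 :: "nat \<Rightarrow> nat \<Rightarrow> nat" where
  "R1 n x = (if x = 1 then n else x - 1)"
definition Rp :: "nat \<Rightarrow> nat \<Rightarrow> nat" where
  "Rp n x = (if x = n then 1 else x + 1)"
definition R1f :: "nat \<Rightarrow> nat \<Rightarrow> nat" where
  "R1f n x = (if x \<in> {1..n} then R1 n x else x)"
definition Rpf :: "nat \<Rightarrow> nat \<Rightarrow> nat" where
  "Rpf n x = (if x \<in> {1..n} then Rp n x else x)"

definition predS :: "nat set \<Rightarrow> nat \<Rightarrow> nat" where
  "predS S x = (if \<exists>y\<in>S. y < x then Max {y\<in>S. y < x} else Max S)"
definition succS :: "nat set \<Rightarrow> nat \<Rightarrow> nat" where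
  "succS S x = (if \<exists>y\<in>S. x < y then Min {y\<in>S. x < y} else Min S)"
definition rhoS :: "nat set \<Rightarrow> nat \<Rightarrow> nat" where
  "rhoS S x = (if x \<in> S then predS S x else x)"
definition piS :: "nat \<Rightarrow> nat set \<Rightarrow> nat \<Rightarrow> nat" where
  "piS n S x = (if x \<in> {1..n} then R1 n (rhoS S x) else x)"

lemma R1_in: "n \<ge> 1 \<Longrightarrow> x \<in> {1..n} \<Longrightarrow> R1 n x \<in> {1..n}"
  by (auto simp: R1_def)
lemma Rp_in: "n \<ge> 1 \<Longrightarrow> x \<in> {1..n} \<Longrightarrow> Rp n x \<in> {1..n}"
  by (auto simp: Rp_def)
lemma R1_Rp: "x \<in> {1..n} \<Longrightarrow> R1 n (Rp n x) = x"
  by (auto simp: R1_def Rp_def)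
lemma Rp_R1: "x \<in> {1..n} \<Longrightarrow> Rp n (R1 n x) = x"
  by (auto simp: R1_def Rp_def)

lemma R1f_permutes: "n \<ge> 1 \<Longrightarrow> R1f n permutes {1..n}"
  unfolding permutes_def
proof (intro conjI allI impI)
  fix x assume "x \<notin> {1..n}" then show "R1f n x = x" by (auto simp: R1f_def)
next
  fix y assume n: "n \<ge> 1"
  show "\<exists>!x. R1f n x = y"
  proof (cases "y \<in> {1..n}")
    case True
    show ?thesis
    proof (rule ex1I[of _ "Rp n y"])
      show "R1f n (Rp n y) = y" using True n Rp_in R1_Rp by (simp add: R1f_def)
      fix x assume "R1f n x = y"
      then show "x = Rp n y" using True n R1_in[of n x] Rp_R1[of x n] by (auto simp: R1f_def split: if_splits)
    qed
  next
    case False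
    show ?thesis
    proof (rule ex1I[of _ y])
      show "R1f n y = y" using False by (auto simp: R1f_def)
      fix x assume "R1f n x = y"
      then show "x = y" using False n R1_in[of n x] by (auto simp: R1f_def split: if_splits)
    qed
  qed
qed

lemma Rpf_permutes: "n \<ge> 1 \<Longrightarrow> Rpf n permutes {1..n}"
  unfolding permutes_def
proof (intro conjI allI impI)
  fix x assume "x \<notin> {1..n}" then show "Rpf n x = x" by (auto simp: Rpf_def)
next
  fix y assume n: "n \<ge> 1"
  show "\<exists>!x. Rpf n x = y"
  proof (cases "y \<in> {1..n}")
    case True
    show ?thesis
    proof (rule ex1I[of _ "R1 n y"])
      show "Rpf n (R1 n y) = y" using True n R1_in Rp_R1 by (simp add: Rpf_def)
      fix x assume "Rpf n x = y"
      then show "x = R1 n y" using True n Rp_in[of n x] R1_Rp[of x n] by (auto simp: Rpf_def split: if_splits)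
    qed
  next
    case False
    show ?thesis
    proof (rule ex1I[of _ y])
      show "Rpf n y = y" using False by (auto simp: Rpf_def)
      fix x assume "Rpf n x = y"
      then show "x = y" using False n Rp_in[of n x] by (auto simp: Rpf_def split: if_splits)
    qed
  qed
qed

lemma wex_rho:
  assumes n: "n \<ge> 1" and rho: "\<rho> permutes {1..n}"
    and pi: "\<And>x. x \<in> {1..n} \<Longrightarrow> \<pi> x = R1 n (\<rho> x)"
  shows "wex n \<pi> = Suc (card {x\<in>{1..n}. x < \<rho> x})"
proof -
  have rin: "\<And>x. x \<in> {1..n} \<Longrightarrow> \<rho> x \<in> {1..n}" by (rule iffD2[OF permutes_in_image[OF rho]])
  have eq: "{i \<in> {1..n}. \<pi> i \<ge> i} = {x\<in>{1..n}. x < \<rho> x} \<union> {x\<in>{1..n}. \<rho> x = 1}"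
  proof -
    have "\<And>x. x \<in> {1..n} \<Longrightarrow> (\<pi> x \<ge> x) = (x < \<rho> x \<or> \<rho> x = 1)"
    proof -
      fix x assume x: "x \<in> {1..n}"
      have "\<rho> x \<in> {1..n}" using rin x .
      then show "(\<pi> x \<ge> x) = (x < \<rho> x \<or> \<rho> x = 1)" using x by (auto simp: pi R1_def)
    qed
    then show ?thesis by auto
  qed
  have one: "{x\<in>{1..n}. \<rho> x = 1} = {inv \<rho> 1}"
  proof -
    have "\<rho> (inv \<rho> 1) = 1" using permutes_inverses(1)[OF rho] .
    moreover have "inv \<rho> 1 \<in> {1..n}" using permutes_in_image[OF rho, of "inv \<rho> 1"] permutes_inverses(1)[OF rho, of 1] n by simp
    moreover have "\<And>x. \<rho> x = 1 \<Longrightarrow> x = inv \<rho> 1" using permutes_inverses(2)[OF rho] by metis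
    ultimately show ?thesis by blast
  qed
  have nb: "inv \<rho> 1 \<notin> {x\<in>{1..n}. x < \<rho> x}" using permutes_inverses(1)[OF rho, of 1] by simp
  have "{x\<in>{1..n}. x < \<rho> x} \<union> {inv \<rho> 1} = insert (inv \<rho> 1) {x\<in>{1..n}. x < \<rho> x}" by blast
  then show ?thesis unfolding wex_def eq one using nb by simp
qed

lemma card2_ex: assumes "finite S" "2 \<le> card S" "x \<in> S" shows "\<exists>y\<in>S. y \<noteq> x"
proof (rule ccontr)
  assume "\<not> ?thesis" then have "S = {x}" using assms(3) by blast
  then show False using assms(2) by simp
qed

lemma MinS_lt_MaxS: assumes "finite S" "2 \<le> card S" shows "Min S < Max S"
proof -
  have ne: "S \<noteq> {}" using assms by auto
  obtain y where y: "y \<in> S" "y \<noteq> Min S" using card2_ex[OF assms Min_in[OF assms(1) ne]] by blast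
  have "Min S \<le> y" "y \<le> Max S" using y assms(1) by auto
  then have "Min S < y" using y by auto
  then show ?thesis using \<open>y \<le> Max S\<close> by (rule less_le_trans)
qed

lemma predS_below:
  assumes fin: "finite S" and x: "x \<in> S" and ex: "\<exists>y\<in>S. y < x"
  shows "predS S x = Max {y\<in>S. y < x}" "predS S x \<in> S" "predS S x < x"
    "\<And>z. z \<in> S \<Longrightarrow> z < x \<Longrightarrow> z \<le> predS S x"
proof -
  have f: "finite {y\<in>S. y < x}" using fin by simp
  have ne: "{y\<in>S. y < x} \<noteq> {}" using ex by blast
  show "predS S x = Max {y\<in>S. y < x}" using ex by (simp add: predS_def)
  then show "predS S x \<in> S" "predS S x < x" using Max_in[OF f ne] by auto
  show "\<And>z. z \<in> S \<Longrightarrow> z < x \<Longrightarrow> z \<le> predS S x"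
    using \<open>predS S x = Max {y\<in>S. y < x}\<close> f by simp
qed

lemma predS_min:
  assumes fin: "finite S" and x: "x \<in> S" and ex: "\<not>(\<exists>y\<in>S. y < x)"
  shows "predS S x = Max S" "x = Min S"
proof -
  show "predS S x = Max S" using ex by (simp add: predS_def)
  have "\<And>y. y \<in> S \<Longrightarrow> x \<le> y" using ex by (meson not_le)
  then have "Min S = x" using Min_eqI[OF fin _ x] by blast
  then show "x = Min S" by simp
qed

lemma predS_in: assumes "finite S" "x \<in> S" shows "predS S x \<in> S"
  using assms predS_below(2) predS_min(1) Max_in by (metis empty_iff)

lemma predS_ne: assumes "finite S" "2 \<le> card S" "x \<in> S" shows "predS S x \<noteq> x"
proof (cases "\<exists>y\<in>S. y < x")
  case True then show ?thesis using predS_below(3)[OF assms(1,3)] by fastforce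
next
  case False then show ?thesis using predS_min[OF assms(1,3)] MinS_lt_MaxS[OF assms(1,2)] by simp
qed

lemma predS_inj: assumes fin: "finite S" and c: "2 \<le> card S" shows "inj_on (predS S) S"
proof (rule inj_onI)
  fix x y assume x: "x \<in> S" and y: "y \<in> S" and eq: "predS S x = predS S y"
  show "x = y"
  proof (rule ccontr)
    assume ne: "x \<noteq> y"
    {
      fix u v assume u: "u \<in> S" and v: "v \<in> S" and uv: "u < v" and e: "predS S u = predS S v"
      have exv: "\<exists>y\<in>S. y < v" using u uv by blast
      have "u \<le> predS S v" using predS_below(4)[OF fin v exv u uv] .
      moreover have "predS S v < v" using predS_below(3)[OF fin v exv] .
      have False
      proof (cases "\<exists>y\<in>S. y < u")
        case True
        then have "predS S u < u" using predS_below(3)[OF fin u] by blast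
        then show False using \<open>u \<le> predS S v\<close> e by simp
      next
        case False
        then have "predS S u = Max S" using predS_min[OF fin u] by blast
        moreover have "v \<le> Max S" using fin v by simp
        ultimately show False using \<open>predS S v < v\<close> e by simp
      qed
    }
    then show False using x y eq ne by (metis linorder_neqE_nat)
  qed
qed

lemma predS_bij: assumes "finite S" "2 \<le> card S" shows "predS S ` S = S"
  by (rule endo_inj_surj) (use assms predS_in predS_inj in auto)

lemma rhoS_permutes: assumes S: "S \<subseteq> {1..n}" and c: "2 \<le> card S"
  shows "rhoS S permutes {1..n}"
proof -
  have fin: "finite S" using S finite_subset by blast
  have inj: "inj_on (rhoS S) {1..n}"
  proof (rule inj_onI)
    fix x y assume x: "x \<in> {1..n}" and y: "y \<in> {1..n}" and e: "rhoS S x = rhoS S y"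
    show "x = y"
    proof (cases "x \<in> S"; cases "y \<in> S")
      assume "x \<in> S" "y \<in> S" then show ?thesis using e predS_inj[OF fin c] by (simp add: rhoS_def inj_on_def)
    next
      assume "x \<in> S" "y \<notin> S" then show ?thesis using e predS_in[OF fin, of x] by (simp add: rhoS_def)
    next
      assume "x \<notin> S" "y \<in> S" then show ?thesis using e predS_in[OF fin, of y] by (simp add: rhoS_def)
    next
      assume "x \<notin> S" "y \<notin> S" then show ?thesis using e by (simp add: rhoS_def)
    qed
  qed
  have sub: "rhoS S ` {1..n} \<subseteq> {1..n}"
    using S predS_in[OF fin] by (auto simp: rhoS_def)
  have "rhoS S ` {1..n} = {1..n}" by (rule endo_inj_surj) (use sub inj in auto)
  then have "bij_betw (rhoS S) {1..n} {1..n}" using inj by (simp add: bij_betw_def)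
  moreover have "\<And>x. x \<notin> {1..n} \<Longrightarrow> rhoS S x = x" using S by (auto simp: rhoS_def)
  ultimately show ?thesis by (rule bij_imp_permutes)
qed

lemma rhoS_exc: assumes S: "S \<subseteq> {1..n}" and c: "2 \<le> card S"
  shows "{x\<in>{1..n}. x < rhoS S x} = {Min S}"
proof -
  have fin: "finite S" using S finite_subset by blast
  have ne: "S \<noteq> {}" using c by auto
  have "\<And>x. x \<in> {1..n} \<Longrightarrow> x < rhoS S x \<longleftrightarrow> x = Min S"
  proof -
    fix x assume x: "x \<in> {1..n}"
    show "x < rhoS S x \<longleftrightarrow> x = Min S"
    proof (cases "x \<in> S")
      case True
      show ?thesis
      proof (cases "\<exists>y\<in>S. y < x")
        case True2: True
        have "x \<noteq> Min S" using True2 fin by (metis Min_le leD)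
        then show ?thesis using predS_below(3)[OF fin True True2] True by (simp add: rhoS_def)
      next
        case False
        then show ?thesis using predS_min[OF fin True False] MinS_lt_MaxS[OF fin c] True by (simp add: rhoS_def)
      qed
    next
      case False
      then show ?thesis using Min_in[OF fin ne] by (auto simp: rhoS_def)
    qed
  qed
  moreover have "Min S \<in> {1..n}" using Min_in[OF fin ne] S by blast
  ultimately show ?thesis by blast
qed

lemma piS_eq: "n \<ge> 1 \<Longrightarrow> S \<subseteq> {1..n} \<Longrightarrow> piS n S = R1f n \<circ> rhoS S"
proof (rule ext)
  fix x assume n: "n \<ge> 1" and S: "S \<subseteq> {1..n}"
  show "piS n S x = (R1f n \<circ> rhoS S) x"
  proof (cases "x \<in> {1..n}")
    case True
    have "rhoS S x \<in> {1..n}" using True S predS_in[of S x] finite_subset[OF S]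
      by (auto simp: rhoS_def)
    then show ?thesis using True by (simp add: piS_def R1f_def)
  next
    case False
    then have "x \<notin> S" using S by blast
    then show ?thesis using False by (auto simp: piS_def R1f_def rhoS_def)
  qed
qed

lemma piS_permutes: "n \<ge> 1 \<Longrightarrow> S \<subseteq> {1..n} \<Longrightarrow> 2 \<le> card S \<Longrightarrow> piS n S permutes {1..n}"
  using piS_eq permutes_compose rhoS_permutes R1f_permutes by metis

lemma piS_wex: assumes n: "n \<ge> 1" and S: "S \<subseteq> {1..n}" and c: "2 \<le> card S"
  shows "wex n (piS n S) = 2"
proof -
  have "wex n (piS n S) = Suc (card {x\<in>{1..n}. x < rhoS S x})"
    by (rule wex_rho[OF n rhoS_permutes[OF S c]]) (simp add: piS_def)
  then show ?thesis using rhoS_exc[OF S c] by simp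
qed

lemma rhoS_recover: assumes S: "S \<subseteq> {1..n}" and c: "2 \<le> card S"
  shows "S = {x\<in>{1..n}. rhoS S x \<noteq> x}"
  using S predS_ne[OF finite_subset[OF S] c] by (auto simp: rhoS_def)

lemma piS_inj: assumes n: "n \<ge> 1"
  shows "inj_on (piS n) {S. S \<subseteq> {1..n} \<and> 2 \<le> card S}"
proof (rule inj_onI)
  fix S T assume S: "S \<in> {S. S \<subseteq> {1..n} \<and> 2 \<le> card S}" and T: "T \<in> {S. S \<subseteq> {1..n} \<and> 2 \<le> card S}"
    and e: "piS n S = piS n T"
  have "\<And>x. x \<in> {1..n} \<Longrightarrow> rhoS S x = rhoS T x"
  proof -
    fix x assume x: "x \<in> {1..n}"
    have "rhoS S x \<in> {1..n}" "rhoS T x \<in> {1..n}"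
      using rhoS_permutes S T x permutes_in_image by (metis (no_types, lifting) mem_Collect_eq)+
    moreover have "R1 n (rhoS S x) = R1 n (rhoS T x)" using e x by (metis piS_def)
    ultimately show "rhoS S x = rhoS T x" by (metis Rp_R1)
  qed
  then show "S = T" using rhoS_recover S T by (metis (no_types, lifting) mem_Collect_eq Collect_cong)
qed

lemma one_exc:
  assumes fin: "finite A" and rho: "\<rho> permutes A" and c1: "card {x\<in>A. x < \<rho> x} = 1"
  defines "S \<equiv> {x\<in>A. \<rho> x \<noteq> x}"
  shows "2 \<le> card S" and "\<And>x. x \<in> S \<Longrightarrow> \<rho> x = predS S x"
proof -
  obtain e where E: "{x\<in>A. x < \<rho> x} = {e}" using c1 card_1_singletonE by blast
  have exc: "\<And>x. x \<in> A \<Longrightarrow> x < \<rho> x \<longleftrightarrow> x = e" using E by blast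
  have eA: "e \<in> A" using E by blast
  have inA: "\<And>x. x \<in> A \<Longrightarrow> \<rho> x \<in> A" by (rule iffD2[OF permutes_in_image[OF rho]])
  have inj: "\<And>x y. \<rho> x = \<rho> y \<Longrightarrow> x = y" using permutes_inj[OF rho] by (meson injD)
  have rS: "\<And>x. x \<in> S \<Longrightarrow> \<rho> x \<in> S"
  proof -
    fix x assume x: "x \<in> S"
    then have "x \<in> A" "\<rho> x \<noteq> x" by (auto simp: S_def)
    then have "\<rho> (\<rho> x) \<noteq> \<rho> x" using inj by metis
    then show "\<rho> x \<in> S" using inA \<open>x \<in> A\<close> by (simp add: S_def)
  qed
  have sur: "\<And>y. y \<in> S \<Longrightarrow> \<exists>x\<in>S. \<rho> x = y"
  proof -
    fix y assume y: "y \<in> S"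
    then have yA: "y \<in> A" and fy: "\<rho> y \<noteq> y" by (auto simp: S_def)
    define x where "x = inv \<rho> y"
    have rx: "\<rho> x = y" unfolding x_def by (rule permutes_inverses(1)[OF rho])
    have "x \<in> A" using iffD1[OF permutes_in_image[OF rho, of x]] rx yA by simp
    moreover have "x \<noteq> y" using rx fy by auto
    ultimately show "\<exists>x\<in>S. \<rho> x = y" using rx by (auto simp: S_def)
  qed
  have eS: "e \<in> S" using exc[OF eA] eA by (auto simp: S_def)
  have finS: "finite S" using fin by (simp add: S_def)
  have neS: "S \<noteq> {}" using eS by blast
  have SA: "\<And>x. x \<in> S \<Longrightarrow> x \<in> A \<and> \<rho> x \<noteq> x" by (simp add: S_def)
  have mine: "Min S = e"
  proof -
    have m: "Min S \<in> S" using Min_in[OF finS neS] .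
    then have "\<rho> (Min S) \<in> S" using rS by blast
    then have "Min S \<le> \<rho> (Min S)" using finS by simp
    then have "Min S < \<rho> (Min S)" using SA[OF m] by auto
    then show ?thesis using exc SA[OF m] by blast
  qed
  have maxe: "\<rho> e = Max S"
  proof -
    have m: "Max S \<in> S" using Max_in[OF finS neS] .
    obtain y where y: "y \<in> S" "\<rho> y = Max S" using sur[OF m] by blast
    have "y \<le> Max S" using finS y by simp
    moreover have "y \<noteq> Max S" using y SA by metis
    ultimately have "y < \<rho> y" using y by simp
    then have "y = e" using exc SA y by blast
    then show ?thesis using y by simp
  qed
  have "e \<noteq> Max S" using maxe SA[OF eS] by simp
  moreover have "Max S \<in> S" using Max_in[OF finS neS] .
  ultimately have "{e, Max S} \<subseteq> S" "card {e, Max S} = 2" using eS by auto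
  then show "2 \<le> card S" using card_mono[OF finS] by metis
  show "\<And>x. x \<in> S \<Longrightarrow> \<rho> x = predS S x"
  proof -
    fix x assume "x \<in> S"
    then show "\<rho> x = predS S x"
    proof (induction x rule: less_induct)
      case (less x)
      show ?case
      proof (cases "x = e")
        case True
        have "\<not> (\<exists>y\<in>S. y < x)" using True mine finS by (metis Min_le leD)
        then show ?thesis using predS_min(1)[OF finS less.prems] True maxe by simp
      next
        case False
        have xA: "x \<in> A" and fx: "\<rho> x \<noteq> x" using SA[OF less.prems] by auto
        have lt: "\<rho> x < x" using exc[OF xA] False fx by auto
        have rxS: "\<rho> x \<in> S" using rS[OF less.prems] .
        have ex: "\<exists>y\<in>S. y < x" using rxS lt by blast
        have le: "\<rho> x \<le> predS S x" using predS_below(4)[OF finS less.prems ex rxS lt] .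
        show ?thesis
        proof (rule ccontr)
          assume "\<rho> x \<noteq> predS S x"
          then have lt2: "\<rho> x < predS S x" using le by simp
          define W where "W = {y\<in>S. \<rho> x < y}"
          have fW: "finite W" using finS by (simp add: W_def)
          have pW: "predS S x \<in> W" using lt2 predS_below(2)[OF finS less.prems ex] by (simp add: W_def)
          then have neW: "W \<noteq> {}" by blast
          define w where "w = Min W"
          have wW: "w \<in> W" using Min_in[OF fW neW] by (simp add: w_def)
          have wS: "w \<in> S" and rw: "\<rho> x < w" using wW by (auto simp: W_def)
          have "w \<le> predS S x" using pW fW by (simp add: w_def)
          then have wx: "w < x" using predS_below(3)[OF finS less.prems ex] by simp
          have IH: "\<rho> w = predS S w" using less.IH[OF wx wS] .
          have exw: "\<exists>y\<in>S. y < w" using rxS rw by blast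
          have a1: "\<rho> x \<le> predS S w" using predS_below(4)[OF finS wS exw rxS rw] .
          have a2: "predS S w \<in> S" "predS S w < w" using predS_below(2,3)[OF finS wS exw] by auto
          have "\<not> (\<rho> x < predS S w)"
          proof
            assume "\<rho> x < predS S w"
            then have "predS S w \<in> W" using a2 by (simp add: W_def)
            then have "w \<le> predS S w" using fW by (simp add: w_def)
            then show False using a2 by simp
          qed
          then have "\<rho> w = \<rho> x" using a1 IH by simp
          then have "w = x" using inj by blast
          then show False using wx by simp
        qed
      qed
    qed
  qed
qed

lemma classify: assumes n: "n \<ge> 1"
  shows "{\<pi>. \<pi> permutes {1..n} \<and> wex n \<pi> = 2} = piS n ` {S. S \<subseteq> {1..n} \<and> 2 \<le> card S}"
proof
  show "piS n ` {S. S \<subseteq> {1..n} \<and> 2 \<le> card S} \<subseteq> {\<pi>. \<pi> permutes {1..n} \<and> wex n \<pi> = 2}"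
  proof
    fix \<pi> assume "\<pi> \<in> piS n ` {S. S \<subseteq> {1..n} \<and> 2 \<le> card S}"
    then obtain S where S: "S \<subseteq> {1..n}" "2 \<le> card S" and e: "\<pi> = piS n S" by blast
    show "\<pi> \<in> {\<pi>. \<pi> permutes {1..n} \<and> wex n \<pi> = 2}"
      using piS_permutes[OF n S] piS_wex[OF n S] e by simp
  qed
next
  show "{\<pi>. \<pi> permutes {1..n} \<and> wex n \<pi> = 2} \<subseteq> piS n ` {S. S \<subseteq> {1..n} \<and> 2 \<le> card S}"
  proof
    fix \<pi> assume "\<pi> \<in> {\<pi>. \<pi> permutes {1..n} \<and> wex n \<pi> = 2}"
    then have p: "\<pi> permutes {1..n}" and w: "wex n \<pi> = 2" by auto
    define \<rho> where "\<rho> = Rpf n \<circ> \<pi>"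
    have rho: "\<rho> permutes {1..n}" unfolding \<rho>_def using permutes_compose[OF p Rpf_permutes[OF n]] .
    have pin: "\<And>x. x \<in> {1..n} \<Longrightarrow> \<pi> x \<in> {1..n}" by (rule iffD2[OF permutes_in_image[OF p]])
    have pr: "\<And>x. x \<in> {1..n} \<Longrightarrow> \<pi> x = R1 n (\<rho> x)"
    proof -
      fix x assume x: "x \<in> {1..n}"
      have "\<rho> x = Rp n (\<pi> x)" using pin[OF x] by (simp add: \<rho>_def Rpf_def)
      then show "\<pi> x = R1 n (\<rho> x)" using R1_Rp pin[OF x] by simp
    qed
    have "card {x\<in>{1..n}. x < \<rho> x} = 1" using wex_rho[OF n rho pr] w by simp
    note oe = one_exc[OF finite_atLeastAtMost rho this]
    define S where "S = {x\<in>{1..n}. \<rho> x \<noteq> x}"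
    have c2: "2 \<le> card S" unfolding S_def by (rule oe(1))
    have pS: "\<And>x. x \<in> S \<Longrightarrow> \<rho> x = predS S x" unfolding S_def by (rule oe(2))
    have SS: "S \<subseteq> {1..n}" by (auto simp: S_def)
    have "\<pi> = piS n S"
    proof
      fix x show "\<pi> x = piS n S x"
      proof (cases "x \<in> {1..n}")
        case True
        have "rhoS S x = \<rho> x"
        proof (cases "x \<in> S")
          case True2: True
          then show ?thesis using pS[OF True2] by (simp add: rhoS_def)
        next
          case False2: False
          then have "\<rho> x = x" using True unfolding S_def by blast
          then show ?thesis using False2 by (simp add: rhoS_def)
        qed
        then show ?thesis using pr[OF True] True by (simp add: piS_def)
      next
        case False
        then show ?thesis using permutes_not_in[OF p False] False by (auto simp: piS_def)
      qed
    qed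
    then show "\<pi> \<in> piS n ` {S. S \<subseteq> {1..n} \<and> 2 \<le> card S}" using c2 SS by blast
  qed
qed

definition dd :: "nat \<Rightarrow> nat \<Rightarrow> nat \<Rightarrow> int" where
  "dd n a b = (int b - int a) mod int n"

lemma dd_eq: "a \<in> {1..n} \<Longrightarrow> b \<in> {1..n} \<Longrightarrow>
  dd n a b = (if a \<le> b then int b - int a else int b + int n - int a)"
proof -
  assume a: "a \<in> {1..n}" and b: "b \<in> {1..n}"
  show ?thesis
  proof (cases "a \<le> b")
    case True
    then show ?thesis using a b by (simp add: dd_def mod_pos_pos_trivial)
  next
    case False
    have "(int b - int a) mod int n = (int b - int a + int n) mod int n" by simp
    also have "\<dots> = int b - int a + int n" using a b False by (intro mod_pos_pos_trivial) auto
    finally show ?thesis using False by (simp add: dd_def)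
  qed
qed

lemma cw3: "cw_order n [a, b, c] \<longleftrightarrow> 0 < dd n a b \<and> dd n a b < dd n a c \<and> 0 < dd n a c"
  by (auto simp: cw_order_def dd_def)

lemma cw4: "cw_order n [a, b, c, d] \<longleftrightarrow> 0 < dd n a b \<and> dd n a b < dd n a c \<and> dd n a c < dd n a d
   \<and> 0 < dd n a c \<and> 0 < dd n a d \<and> dd n a b < dd n a d"
  by (auto simp: cw_order_def dd_def)

lemma R1_int: "x \<in> {1..n} \<Longrightarrow> int (R1 n x) = (if x = 1 then int n else int x - 1)"
  by (auto simp: R1_def)

lemma predS_prop:
  assumes S: "S \<subseteq> {1..n}" and c: "2 \<le> card S" and x: "x \<in> S" and z: "z \<in> S"
  shows "\<not> (0 < dd n (predS S x) z \<and> dd n (predS S x) z < dd n (predS S x) x)"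
proof
  assume h: "0 < dd n (predS S x) z \<and> dd n (predS S x) z < dd n (predS S x) x"
  have fin: "finite S" using S finite_subset by blast
  let ?a = "predS S x"
  have aS: "?a \<in> S" using predS_in[OF fin x] .
  have aN: "?a \<in> {1..n}" "x \<in> {1..n}" "z \<in> {1..n}" using aS x z S by auto
  note h' = h[unfolded dd_eq[OF aN(1) aN(2)] dd_eq[OF aN(1) aN(3)]]
  show False
  proof (cases "\<exists>y\<in>S. y < x")
    case True
    have "?a < x" using predS_below(3)[OF fin x True] .
    then have "?a < z \<and> z < x" using h' aN by (auto split: if_splits)
    then show False using predS_below(4)[OF fin x True z] by simp
  next
    case False
    have "?a = Max S" "x = Min S" using predS_min[OF fin x False] by auto
    then have "z \<le> ?a" "x \<le> z" using fin z by auto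
    then show False using h' aN by (auto split: if_splits)
  qed
qed

lemma succS_in: assumes S: "S \<subseteq> {1..n}" and c: "2 \<le> card S" shows "succS S j \<in> S"
proof -
  have fin: "finite S" using S finite_subset by blast
  have ne: "S \<noteq> {}" using c by auto
  show ?thesis
  proof (cases "\<exists>y\<in>S. j < y")
    case True
    then have "{y\<in>S. j < y} \<noteq> {}" by blast
    then show ?thesis using True Min_in[of "{y\<in>S. j < y}"] fin by (simp add: succS_def)
  next
    case False
    then show ?thesis using Min_in[OF fin ne] by (simp add: succS_def)
  qed
qed

lemma succS_prop:
  assumes S: "S \<subseteq> {1..n}" and c: "2 \<le> card S" and j: "j \<in> {1..n}" "j \<notin> S" and z: "z \<in> S"
  shows "\<not> (0 < dd n j z \<and> dd n j z < dd n j (succS S j))"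
proof
  assume h: "0 < dd n j z \<and> dd n j z < dd n j (succS S j)"
  have fin: "finite S" using S finite_subset by blast
  have ne: "S \<noteq> {}" using c by auto
  let ?s = "succS S j"
  have sS: "?s \<in> S" by (rule succS_in[OF S c])
  have sN: "?s \<in> {1..n}" "z \<in> {1..n}" using sS z S by auto
  note h' = h[unfolded dd_eq[OF j(1) sN(1)] dd_eq[OF j(1) sN(2)]]
  show False
  proof (cases "\<exists>y\<in>S. j < y")
    case True
    have f2: "finite {y\<in>S. j < y}" using fin by simp
    have ne2: "{y\<in>S. j < y} \<noteq> {}" using True by blast
    have se: "?s = Min {y\<in>S. j < y}" using True by (simp add: succS_def)
    have "?s \<in> {y\<in>S. j < y}" using Min_in[OF f2 ne2] se by simp
    then have js: "j < ?s" by simp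
    have "j < z \<and> z < ?s" using h' js sN j by (auto split: if_splits)
    then have "?s \<le> z" using se f2 z by simp
    then show False using \<open>j < z \<and> z < ?s\<close> by simp
  next
    case False
    have se: "?s = Min S" using False by (simp add: succS_def)
    have "z \<le> j" using False z by auto
    moreover have "?s \<le> z" using se fin z by simp
    moreover have "?s \<le> j" using False sS by auto
    ultimately show False using h' sN j by (auto split: if_splits)
  qed
qed

lemma piS_val: "x \<in> {1..n} \<Longrightarrow> piS n S x = R1 n (rhoS S x)"
  by (simp add: piS_def)

lemma aligned_iff:
  assumes n: "n \<ge> 2" and S: "S \<subseteq> {1..n}" and c: "2 \<le> card S"
    and i: "i \<in> {1..n}" and j: "j \<in> {1..n}"
  shows "aligned n (piS n S) i j \<longleftrightarrow> j \<notin> S \<and> i = succS S j"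
proof -
  have fin: "finite S" using S finite_subset by blast
  let ?p = "piS n S"
  have R1N: "\<And>x. x \<in> {1..n} \<Longrightarrow> R1 n x \<in> {1..n}" using R1_in n by simp
  have ddb: "\<And>a b. 0 \<le> dd n a b \<and> dd n a b < int n" using n by (simp add: dd_def)
  show ?thesis
  proof
    assume al: "aligned n ?p i j"
    then have ij: "i \<noteq> j" and pj: "?p j \<noteq> j" and dl: "distinct (align_list ?p i j)"
      and cw: "cw_order n (align_list ?p i j)" by (auto simp: aligned_def)
    have iS: "i \<in> S"
    proof (rule ccontr)
      assume "i \<notin> S"
      then have pi: "?p i = R1 n i" using i by (simp add: piS_def rhoS_def)
      then have ne: "?p i \<noteq> i" using i n by (auto simp: R1_def)
      have pjN: "?p j \<in> {1..n}" using permutes_in_image[OF piS_permutes[OF _ S c]] j n by simp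
      have "cw_order n [i, R1 n i, ?p j, j]" using cw ne pi by (simp add: align_list_def)
      then have "dd n i (R1 n i) < dd n i (?p j)" by (simp add: cw4)
      moreover have "dd n i (R1 n i) = int n - 1"
        using i dd_eq[OF i R1N[OF i]] R1_int[OF i] by (auto split: if_splits)
      ultimately show False using ddb[of i "?p j"] by simp
    qed
    define a where "a = predS S i"
    have aS: "a \<in> S" unfolding a_def by (rule predS_in[OF fin iS])
    have ai: "a \<noteq> i" unfolding a_def by (rule predS_ne[OF fin c iS])
    have Pa: "\<And>z. z \<in> S \<Longrightarrow> \<not> (0 < dd n a z \<and> dd n a z < dd n a i)"
      unfolding a_def by (rule predS_prop[OF S c iS])
    have pi: "?p i = R1 n a" using i iS by (simp add: piS_def rhoS_def a_def)
    have aN: "a \<in> {1..n}" using aS S by blast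
    have A1: "int (R1 n a) = (if a = 1 then int n else int a - 1)" by (rule R1_int[OF aN])
    have A1N: "R1 n a \<in> {1..n}" by (rule R1N[OF aN])
    show "j \<notin> S \<and> i = succS S j"
    proof (cases "j \<in> S")
      case True
      define b where "b = predS S j"
      have bS: "b \<in> S" unfolding b_def by (rule predS_in[OF fin True])
      have bN: "b \<in> {1..n}" using bS S by blast
      have pj2: "?p j = R1 n b" using j True by (simp add: piS_def rhoS_def b_def)
      have B1N: "R1 n b \<in> {1..n}" by (rule R1N[OF bN])
      have B1: "int (R1 n b) = (if b = 1 then int n else int b - 1)" by (rule R1_int[OF bN])
      have Paj: "\<not> (0 < dd n a j \<and> dd n a j < dd n a i)" using Pa[OF True] .
      show ?thesis
      proof (cases "R1 n a = i")
        case True2: True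
        have "cw_order n [i, R1 n b, j]" "distinct [i, R1 n b, j]"
          using cw dl True2 pi pj2 by (simp_all add: align_list_def)
        then have h: "0 < dd n i (R1 n b)" "dd n i (R1 n b) < dd n i j" "R1 n b \<noteq> j" "i \<noteq> j"
          by (auto simp: cw3)
        note h' = h[unfolded dd_eq[OF i B1N] dd_eq[OF i j]]
        note P' = Paj[unfolded dd_eq[OF aN j] dd_eq[OF aN i]]
        have False using h' P' A1 B1 True2 ai i j aN bN A1N B1N
          by (simp split: if_splits; linarith)
        then show ?thesis ..
      next
        case False2: False
        have "cw_order n [i, R1 n a, R1 n b, j]" "distinct [i, R1 n a, R1 n b, j]"
          using cw dl False2 pi pj2 by (simp_all add: align_list_def)
        then have h: "dd n i (R1 n a) < dd n i (R1 n b)" "dd n i (R1 n b) < dd n i j"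
          "0 < dd n i (R1 n a)" "R1 n b \<noteq> j" "R1 n a \<noteq> j" "R1 n a \<noteq> R1 n b" "i \<noteq> j"
          by (auto simp: cw4)
        note h' = h[unfolded dd_eq[OF i B1N] dd_eq[OF i j] dd_eq[OF i A1N]]
        note P' = Paj[unfolded dd_eq[OF aN j] dd_eq[OF aN i]]
        have False using h' P' A1 B1 False2 ai i j aN bN A1N B1N
          by (simp split: if_splits; linarith)
        then show ?thesis ..
      qed
    next
      case False
      define s where "s = succS S j"
      have sS: "s \<in> S" unfolding s_def by (rule succS_in[OF S c])
      have sN: "s \<in> {1..n}" using sS S by blast
      have Ps: "\<And>z. z \<in> S \<Longrightarrow> \<not> (0 < dd n j z \<and> dd n j z < dd n j s)"
        unfolding s_def by (rule succS_prop[OF S c j False])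
      have pj2: "?p j = R1 n j" using j False by (simp add: piS_def rhoS_def)
      have J1N: "R1 n j \<in> {1..n}" by (rule R1N[OF j])
      have J1: "int (R1 n j) = (if j = 1 then int n else int j - 1)" by (rule R1_int[OF j])
      have sj: "s \<noteq> j" using sS False by blast
      have aj: "a \<noteq> j" using aS False by blast
      have "i = s"
      proof (rule ccontr)
        assume is': "i \<noteq> s"
        have P1: "\<not> (0 < dd n j i \<and> dd n j i < dd n j s)" using Ps[OF iS] .
        have P2: "\<not> (0 < dd n a s \<and> dd n a s < dd n a i)" using Pa[OF sS] .
        note P1' = P1[unfolded dd_eq[OF j i] dd_eq[OF j sN]]
        note P2' = P2[unfolded dd_eq[OF aN sN] dd_eq[OF aN i]]
        show False
        proof (cases "R1 n a = i")
          case True2: True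
          have "cw_order n [i, R1 n j, j]" "distinct [i, R1 n j, j]"
            using cw dl True2 pi pj2 by (simp_all add: align_list_def)
          then have h: "0 < dd n i (R1 n j)" "dd n i (R1 n j) < dd n i j" "R1 n j \<noteq> j" "i \<noteq> j"
            by (auto simp: cw3)
          note h' = h[unfolded dd_eq[OF i J1N] dd_eq[OF i j]]
          show False using h' P1' P2' A1 J1 True2 ai aj sj is' i j aN sN A1N J1N
            by (simp split: if_splits; linarith)
        next
          case False2: False
          have "cw_order n [i, R1 n a, R1 n j, j]" "distinct [i, R1 n a, R1 n j, j]"
            using cw dl False2 pi pj2 by (simp_all add: align_list_def)
          then have h: "dd n i (R1 n a) < dd n i (R1 n j)" "dd n i (R1 n j) < dd n i j"
            "0 < dd n i (R1 n a)" "R1 n j \<noteq> j" "R1 n a \<noteq> j" "R1 n a \<noteq> R1 n j" "i \<noteq> j"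
            by (auto simp: cw4)
          note h' = h[unfolded dd_eq[OF i J1N] dd_eq[OF i j] dd_eq[OF i A1N]]
          show False using h' P1' P2' A1 J1 False2 ai aj sj is' i j aN sN A1N J1N
            by (simp split: if_splits; linarith)
        qed
      qed
      then show ?thesis using False s_def by simp
    qed
  next
    assume h: "j \<notin> S \<and> i = succS S j"
    then have jS: "j \<notin> S" and is': "i = succS S j" by auto
    have iS: "i \<in> S" using is' succS_in[OF S c] by simp
    define a where "a = predS S i"
    have aS: "a \<in> S" unfolding a_def by (rule predS_in[OF fin iS])
    have ai: "a \<noteq> i" unfolding a_def by (rule predS_ne[OF fin c iS])
    have aN: "a \<in> {1..n}" using aS S by blast
    have aj: "a \<noteq> j" using aS jS by blast
    have ij: "i \<noteq> j" using iS jS by blast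
    have Ps: "\<not> (0 < dd n j a \<and> dd n j a < dd n j i)"
      using succS_prop[OF S c j jS aS] is' by simp
    have pi: "?p i = R1 n a" using i iS by (simp add: piS_def rhoS_def a_def)
    have pj2: "?p j = R1 n j" using j jS by (simp add: piS_def rhoS_def)
    have A1: "int (R1 n a) = (if a = 1 then int n else int a - 1)" by (rule R1_int[OF aN])
    have A1N: "R1 n a \<in> {1..n}" by (rule R1N[OF aN])
    have J1N: "R1 n j \<in> {1..n}" by (rule R1N[OF j])
    have J1: "int (R1 n j) = (if j = 1 then int n else int j - 1)" by (rule R1_int[OF j])
    note P' = Ps[unfolded dd_eq[OF j aN] dd_eq[OF j i]]
    have pjj: "?p j \<noteq> j" using pj2 n j by (auto simp: R1_def)
    show "aligned n ?p i j"
    proof (cases "R1 n a = i")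
      case True
      have g: "0 < dd n i (R1 n j) \<and> dd n i (R1 n j) < dd n i j \<and> 0 < dd n i j
         \<and> i \<noteq> R1 n j \<and> R1 n j \<noteq> j"
        unfolding dd_eq[OF i J1N] dd_eq[OF i j]
        using P' A1 J1 True ai aj ij i j aN A1N J1N n
        by (simp split: if_splits; linarith)
      then show ?thesis using ij pjj True pi pj2
        by (simp add: aligned_def align_list_def cw3)
    next
      case False
      have g: "dd n i (R1 n a) < dd n i (R1 n j) \<and> dd n i (R1 n j) < dd n i j
        \<and> 0 < dd n i (R1 n a) \<and> 0 < dd n i (R1 n j) \<and> 0 < dd n i j \<and> dd n i (R1 n a) < dd n i j
        \<and> R1 n a \<noteq> R1 n j \<and> R1 n a \<noteq> j \<and> i \<noteq> R1 n j \<and> R1 n j \<noteq> j"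
        unfolding dd_eq[OF i J1N] dd_eq[OF i j] dd_eq[OF i A1N]
        using P' A1 J1 False ai aj ij i j aN A1N J1N n
        by (simp split: if_splits; linarith)
      then show ?thesis using ij pjj False pi pj2
        by (simp add: aligned_def align_list_def cw4)
    qed
  qed
qed

lemma al_piS: assumes n: "n \<ge> 2" and S: "S \<subseteq> {1..n}" and c: "2 \<le> card S"
  shows "al n (piS n S) = n - card S"
proof -
  have fin: "finite S" using S finite_subset by blast
  let ?A = "{{i, j} | i j. i \<in> {1..n} \<and> j \<in> {1..n} \<and>
                    (aligned n (piS n S) i j \<or> aligned n (piS n S) j i)}"
  have sN: "\<And>j. succS S j \<in> {1..n}" using succS_in[OF S c] S by blast
  have eq: "?A = (\<lambda>j. {succS S j, j}) ` ({1..n} - S)"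
  proof
    show "?A \<subseteq> (\<lambda>j. {succS S j, j}) ` ({1..n} - S)"
    proof
      fix X assume "X \<in> ?A"
      then obtain i j where X: "X = {i, j}" and i: "i \<in> {1..n}" and j: "j \<in> {1..n}"
        and al: "aligned n (piS n S) i j \<or> aligned n (piS n S) j i" by blast
      show "X \<in> (\<lambda>j. {succS S j, j}) ` ({1..n} - S)"
      proof (cases "aligned n (piS n S) i j")
        case True
        then have "j \<notin> S" "i = succS S j" using aligned_iff[OF n S c i j] by auto
        then show ?thesis using X j by blast
      next
        case False
        then have "aligned n (piS n S) j i" using al by blast
        then have "i \<notin> S" "j = succS S i" using aligned_iff[OF n S c j i] by auto
        then have "X = {succS S i, i}" "i \<in> {1..n} - S" using X i by auto
        then show ?thesis by blast
      qed
    qed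
  next
    show "(\<lambda>j. {succS S j, j}) ` ({1..n} - S) \<subseteq> ?A"
    proof
      fix X assume "X \<in> (\<lambda>j. {succS S j, j}) ` ({1..n} - S)"
      then obtain j where j: "j \<in> {1..n}" "j \<notin> S" and X: "X = {succS S j, j}" by blast
      have "aligned n (piS n S) (succS S j) j" using aligned_iff[OF n S c sN j(1)] j by simp
      then show "X \<in> ?A" using X j sN by blast
    qed
  qed
  have inj: "inj_on (\<lambda>j. {succS S j, j}) ({1..n} - S)"
  proof (rule inj_onI)
    fix x y assume x: "x \<in> {1..n} - S" and y: "y \<in> {1..n} - S" and e: "{succS S x, x} = {succS S y, y}"
    have "x \<in> {succS S y, y}" using e by blast
    moreover have "x \<noteq> succS S y" using x succS_in[OF S c, of y] by blast
    ultimately show "x = y" by blast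
  qed
  have "al n (piS n S) = card ?A" by (simp add: al_def)
  also have "\<dots> = card ({1..n} - S)" unfolding eq by (rule card_image[OF inj])
  also have "\<dots> = n - card S" using card_Diff_subset[OF fin S] by simp
  finally show ?thesis .
qed

lemma sum_subsets: assumes n: "n \<ge> 2"
  shows "(\<Sum>S\<in>{S. S \<subseteq> {1..n} \<and> 2 \<le> card S}. (q::real) ^ (card S - 2))
         = (\<Sum>i = 0..n - 2. real (n choose (i + 2)) * q ^ i)"
proof -
  let ?F = "{S. S \<subseteq> {1..n} \<and> 2 \<le> card S}"
  have fF: "finite ?F" by (rule finite_subset[of _ "Pow {1..n}"]) auto
  have img: "card ` ?F \<subseteq> {2..n}"
  proof
    fix k assume "k \<in> card ` ?F"
    then obtain S where "S \<subseteq> {1..n}" "2 \<le> card S" "k = card S" by blast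
    moreover have "card S \<le> n" using card_mono[OF finite_atLeastAtMost \<open>S \<subseteq> {1..n}\<close>] by simp
    ultimately show "k \<in> {2..n}" by simp
  qed
  have "(\<Sum>S\<in>?F. q ^ (card S - 2)) = (\<Sum>k\<in>{2..n}. \<Sum>S\<in>{S\<in>?F. card S = k}. q ^ (card S - 2))"
    by (rule sum.group[OF fF finite_atLeastAtMost img, symmetric])
  also have "\<dots> = (\<Sum>k\<in>{2..n}. real (n choose k) * q ^ (k - 2))"
  proof (rule sum.cong[OF refl])
    fix k assume k: "k \<in> {2..n}"
    have e: "{S\<in>?F. card S = k} = {S. S \<subseteq> {1..n} \<and> card S = k}" using k by auto
    have "(\<Sum>S\<in>{S\<in>?F. card S = k}. q ^ (card S - 2)) = (\<Sum>S\<in>{S\<in>?F. card S = k}. q ^ (k - 2))"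
      by (rule sum.cong) auto
    also have "\<dots> = real (card {S. S \<subseteq> {1..n} \<and> card S = k}) * q ^ (k - 2)" using e by simp
    also have "card {S. S \<subseteq> {1..n} \<and> card S = k} = n choose k"
      using n_subsets[OF finite_atLeastAtMost, of 1 n k] by simp
    finally show "(\<Sum>S\<in>{S\<in>?F. card S = k}. q ^ (card S - 2)) = real (n choose k) * q ^ (k - 2)" .
  qed
  also have "\<dots> = (\<Sum>i = 0..n - 2. real (n choose (i + 2)) * q ^ i)"
  proof -
    have h: "{2..n} = {0 + 2..(n - 2) + 2}" using n by simp
    show ?thesis by (subst h, subst sum.shift_bounds_cl_nat_ivl) simp
  qed
  finally show ?thesis .
qed

theorem mainTheorem11:
  fixes n :: nat and q :: real
  assumes "n \<ge> 2" and "q \<noteq> 0"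
  shows "Ehat 2 n q = (\<Sum>i = 0..n - 2. real (n choose (i + 2)) * q ^ i)"
proof -
  have n1: "n \<ge> 1" using assms(1) by simp
  let ?F = "{S. S \<subseteq> {1..n} \<and> 2 \<le> card S}"
  have "E 2 n q = (\<Sum>\<pi>\<in>piS n ` ?F. q powi (int (2 * (n - 2)) - int (al n \<pi>)))"
    unfolding E_def classify[OF n1] by simp
  also have "\<dots> = (\<Sum>S\<in>?F. q powi (int (2 * (n - 2)) - int (al n (piS n S))))"
    by (rule sum.reindex[OF piS_inj[OF n1], unfolded comp_def])
  also have "\<dots> = (\<Sum>S\<in>?F. q powi (int (2 * (n - 2)) - int (n - card S)))"
    by (rule sum.cong[OF refl]) (use al_piS[OF assms(1)] in auto)
  finally have e: "E 2 n q = \<dots>" .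
  have "Ehat 2 n q = (\<Sum>S\<in>?F. q powi (int 2 - int n) * q powi (int (2 * (n - 2)) - int (n - card S)))"
    unfolding Ehat_def e by (simp add: sum_distrib_left)
  also have "\<dots> = (\<Sum>S\<in>?F. q ^ (card S - 2))"
  proof (rule sum.cong[OF refl])
    fix S assume S: "S \<in> ?F"
    have cn: "card S \<le> n" using S card_mono[OF finite_atLeastAtMost, of S 1 n] by auto
    have c2: "2 \<le> card S" using S by simp
    have "q powi (int 2 - int n) * q powi (int (2 * (n - 2)) - int (n - card S))
          = q powi ((int 2 - int n) + (int (2 * (n - 2)) - int (n - card S)))"
      using assms(2) by (simp add: power_int_add)
    also have "(int 2 - int n) + (int (2 * (n - 2)) - int (n - card S)) = int (card S - 2)"
      using cn c2 assms(1) by simp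
    finally show "q powi (int 2 - int n) * q powi (int (2 * (n - 2)) - int (n - card S)) = q ^ (card S - 2)"
      by simp
  qed
  also have "\<dots> = (\<Sum>i = 0..n - 2. real (n choose (i + 2)) * q ^ i)"
    by (rule sum_subsets[OF assms(1)])
  finally show ?thesis .
qed

end
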